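(* Let $k\ge2$ be an integer and let $(D,X)$ be an instance of 3NodeCover with $|D|=n$ and $\bigcup_{d\in D}d=X$. Construct a digraph $G$ as follows: a vertex $v_d$ for each $d\in D$ (the set of these is $V_1$), a vertex $w_t$ for each $t\in X$ (the set of these is $V_2$), an edge $(v_d,w_t)$ whenever $t\in d$, an extra vertex $a$ with an edge $(a,v)$ for every $v\in V_1$, and for each $v\in V_1$ new vertices $v_1,\dots,v_{k-1}$ and the directed path $a\to v_1\to v_2\to\cdots\to v_{k-1}\to v$ of length $k$. Then $$S_k(G)=OPT_{3NC}+kn+\sum_{d\in D}|d|,$$ where $OPT_{3NC}$ is the optimum of the 3NodeCover instance.
   Context: An instance of 3NodeCover consists of a collection $D$ of subsets of a universe $X$, each subset having at most $3$ elements and each element of $X$ lying in at most $2$ subsets; $OPT_{3NC}$ is the minimum size of a subcollection $M\subseteq D$ with $\bigcup M=X$. For a digraph $G$, a $k$-TC-spanner is a digraph on $V(G)$ whose edges lie in the transitive closure of $G$ such that its directed distance from $u$ to $v$ is at most $k$ whenever $v$ is reachable from $u$ in $G$; $S_k(G)$ is the minimum number of edges of a $k$-TC-spanner. *)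

theory Defs
  imports Main
begin

definition is_3nc_instance :: "'a set set \<Rightarrow> 'a set \<Rightarrow> bool" where
  "is_3nc_instance D X \<longleftrightarrow> finite D \<and> (\<forall>d\<in>D. d \<subseteq> X \<and> card d \<le> 3 \<and> finite d)
     \<and> (\<forall>x\<in>X. card {d\<in>D. x \<in> d} \<le> 2)"

definition opt_3nc :: "'a set set \<Rightarrow> 'a set \<Rightarrow> nat" where
  "opt_3nc D X = Min {card M | M. M \<subseteq> D \<and> \<Union>M = X}"

definition is_tc_spanner :: "('v \<times> 'v) set \<Rightarrow> nat \<Rightarrow> ('v \<times> 'v) set \<Rightarrow> bool" where
  "is_tc_spanner E k H \<longleftrightarrow> H \<subseteq> E\<^sup>+ \<and> (\<forall>(u,v)\<in>E\<^sup>+. \<exists>j\<le>k. (u,v) \<in> H ^^ j)"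

definition S_k :: "nat \<Rightarrow> ('v \<times> 'v) set \<Rightarrow> nat" where
  "S_k k E = Min {card H | H. is_tc_spanner E k H}"

text \<open>Vertices of the constructed digraph: a, v_d, w_t, and path vertices (v_d)_i.\<close>
datatype 'a vtx = VA | VD "'a set" | WT 'a | PV "'a set" nat

definition nc_graph :: "nat \<Rightarrow> 'a set set \<Rightarrow> 'a set \<Rightarrow> ('a vtx \<times> 'a vtx) set" where
  "nc_graph k D X =
     {(VD d, WT t) | d t. d \<in> D \<and> t \<in> X \<and> t \<in> d}
   \<union> {(VA, VD d) | d. d \<in> D}
   \<union> {(VA, PV d 1) | d. d \<in> D}
   \<union> {(PV d i, PV d (Suc i)) | d i. d \<in> D \<and> 1 \<le> i \<and> Suc i \<le> k - 1}
   \<union> {(PV d (k - 1), VD d) | d. d \<in> D}"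

end

theory Submission
  imports Defs
begin


lemma chain_bound:
  "finite G \<Longrightarrow> r \<notin> G \<Longrightarrow> (\<forall>x\<in>G. \<forall>a b. (a,x)\<in>H \<longrightarrow> (b,x)\<in>H \<longrightarrow> a=b)
   \<Longrightarrow> (\<forall>x\<in>G. \<forall>a. (a,x)\<in>H \<longrightarrow> a\<in>G \<or> a=r) \<Longrightarrow> (\<forall>y\<in>G. (y,r)\<notin>H\<^sup>*)
   \<Longrightarrow> (\<forall>x. (x,x)\<notin>H\<^sup>+) \<Longrightarrow> v\<in>G \<Longrightarrow> (\<forall>y\<in>G. (y,v)\<in>H\<^sup>*) \<Longrightarrow> (r,v)\<in>H^^m
   \<Longrightarrow> card G \<le> m"
proof (induction m arbitrary: G v)
  case 0
  then show ?case by auto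
next
  case (Suc m)
  from Suc.prems(9) obtain u where ru: "(r,u)\<in>H^^m" and uv: "(u,v)\<in>H" by (rule relpow_Suc_E)
  have pred: "\<And>y. y \<in> G \<Longrightarrow> y \<noteq> v \<Longrightarrow> (y,u) \<in> H\<^sup>*"
  proof -
    fix y assume y: "y \<in> G" "y \<noteq> v"
    have "(y,v) \<in> H\<^sup>+" using Suc.prems(8) y by (meson rtranclD)
    then obtain w where "(y,w)\<in>H\<^sup>*" "(w,v)\<in>H" by (meson tranclD2)
    moreover have "w = u" using Suc.prems(3,7) uv \<open>(w,v)\<in>H\<close> by blast
    ultimately show "(y,u) \<in> H\<^sup>*" by simp
  qed
  have "u \<in> G \<or> u = r" using Suc.prems(4,7) uv by blast
  then show ?case
  proof
    assume "u = r"
    have "G \<subseteq> {v}"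
    proof
      fix y assume "y \<in> G"
      show "y \<in> {v}"
      proof (rule ccontr)
        assume "y \<notin> {v}"
        then have "(y,r)\<in>H\<^sup>*" using pred \<open>y\<in>G\<close> \<open>u=r\<close> by auto
        then show False using Suc.prems(5) \<open>y\<in>G\<close> by auto
      qed
    qed
    then have "card G \<le> 1" using card_mono[OF _ \<open>G \<subseteq> {v}\<close>] by simp
    then show ?thesis by simp
  next
    assume uG: "u \<in> G"
    have uv': "u \<noteq> v" using uv Suc.prems(6) by auto
    let ?G = "G - {v}"
    have "card ?G \<le> m"
    proof (rule Suc.IH)
      show "finite ?G" using Suc.prems(1) by auto
      show "r \<notin> ?G" using Suc.prems(2) by auto
      show "\<forall>x\<in>?G. \<forall>a b. (a,x)\<in>H \<longrightarrow> (b,x)\<in>H \<longrightarrow> a=b" using Suc.prems(3) by auto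
      show "\<forall>x\<in>?G. \<forall>a. (a,x)\<in>H \<longrightarrow> a\<in>?G \<or> a=r"
      proof (intro ballI allI impI)
        fix x a assume x: "x \<in> ?G" and ax: "(a,x)\<in>H"
        have "a \<in> G \<or> a = r" using Suc.prems(4) x ax by auto
        moreover have "a \<noteq> v"
        proof
          assume "a = v"
          have "(x,v)\<in>H\<^sup>*" using Suc.prems(8) x by auto
          then have "(v,v)\<in>H\<^sup>+" using ax \<open>a=v\<close> by auto
          then show False using Suc.prems(6) by auto
        qed
        ultimately show "a\<in>?G \<or> a=r" by auto
      qed
      show "\<forall>y\<in>?G. (y,r)\<notin>H\<^sup>*" using Suc.prems(5) by auto
      show "\<forall>x. (x,x)\<notin>H\<^sup>+" by fact
      show "u \<in> ?G" using uG uv' by auto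
      show "\<forall>y\<in>?G. (y,u)\<in>H\<^sup>*" using pred by auto
      show "(r,u)\<in>H^^m" by fact
    qed
    moreover have "card G = Suc (card ?G)" using Suc.prems(1,7)
      by (metis card_Suc_Diff1)
    ultimately show ?thesis by simp
  qed
qed

definition Rp :: "nat \<Rightarrow> 'a set set \<Rightarrow> 'a set \<Rightarrow> 'a vtx \<Rightarrow> 'a vtx \<Rightarrow> bool" where
 "Rp k D X x y \<longleftrightarrow> (\<exists>d\<in>D. x=VA \<and> y = VD d) \<or> (\<exists>d\<in>D. \<exists>i. 1\<le>i \<and> i\<le>k-1 \<and> x=VA \<and> y = PV d i)
   \<or> (\<exists>t\<in>X. x=VA \<and> y=WT t) \<or> (\<exists>d\<in>D. \<exists>i j. 1\<le>i \<and> i<j \<and> j\<le>k-1 \<and> x=PV d i \<and> y=PV d j)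
   \<or> (\<exists>d\<in>D. \<exists>i. 1\<le>i \<and> i \<le> k-1 \<and> x=PV d i \<and> y = VD d)
   \<or> (\<exists>d\<in>D. \<exists>i t. 1\<le>i \<and> i\<le>k-1 \<and> t\<in>d \<and> x=PV d i \<and> y=WT t)
   \<or> (\<exists>d\<in>D. \<exists>t\<in>d. x=VD d \<and> y=WT t)"

definition Hs :: "nat \<Rightarrow> 'a set set \<Rightarrow> 'a set set \<Rightarrow> ('a vtx \<times> 'a vtx) set" where
 "Hs k D M = {(VD d, WT t) | d t. d\<in>D \<and> t\<in>d} \<union> {(VA, PV d 1)|d. d\<in>D}
   \<union> {(PV d i, PV d (Suc i)) | d i. d\<in>D \<and> 1\<le>i \<and> Suc i \<le> k-1} \<union> {(PV d (k-1), VD d)|d. d\<in>D}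
   \<union> {(VA, VD d)|d. d\<in>M}"

lemma pv_chain:
  assumes "\<And>i. 1\<le>i \<Longrightarrow> Suc i \<le> k-1 \<Longrightarrow> (PV d i, PV d (Suc i)) \<in> F"
  shows "1\<le>i \<Longrightarrow> i\<le>j \<Longrightarrow> j\<le>k-1 \<Longrightarrow> (PV d i, PV d j) \<in> F^^(j-i)"
proof (induction j)
  case 0 then show ?case by simp
next
  case (Suc j)
  show ?case
  proof (cases "i = Suc j")
    case True then show ?thesis by simp
  next
    case False
    then have "(PV d i, PV d j) \<in> F^^(j-i)" using Suc by auto
    moreover have "(PV d j, PV d (Suc j)) \<in> F" using assms Suc.prems False by auto
    ultimately have "(PV d i, PV d (Suc j)) \<in> F^^Suc (j-i)" by (rule relpow_Suc_I)
    moreover have "Suc (j-i) = Suc j - i" using False Suc.prems by auto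
    ultimately show ?thesis by simp
  qed
qed

locale ncl =
  fixes k :: nat and D :: "'a set set" and X :: "'a set"
  assumes k2: "k \<ge> 2" and inst: "is_3nc_instance D X" and cov: "\<Union>D = X"
begin

lemma finD: "finite D" using inst unfolding is_3nc_instance_def by auto
lemma fin_d: "d \<in> D \<Longrightarrow> finite d" using inst unfolding is_3nc_instance_def by auto
lemma finX: "finite X" using cov finD fin_d by auto
lemma subX: "d \<in> D \<Longrightarrow> d \<subseteq> X" using cov by auto

lemma E_R: "(x,y) \<in> nc_graph k D X \<Longrightarrow> Rp k D X x y"
  unfolding nc_graph_def
proof (elim UnE CollectE exE conjE)
qed (use k2 in \<open>simp_all add: Rp_def\<close>)

lemma trancl_R: "(x,y) \<in> (nc_graph k D X)\<^sup>+ \<Longrightarrow> Rp k D X x y"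
proof (induction rule: trancl_induct)
  case (base y) then show ?case by (rule E_R)
next
  case (step y z)
  from step(2) consider
      (a) d t where "y = VD d" "z = WT t" "d\<in>D" "t\<in>X" "t\<in>d"
    | (b) d where "y = VA" "z = VD d"
    | (c) d where "y = VA" "z = PV d 1"
    | (e) d i where "y = PV d i" "z = PV d (Suc i)" "d\<in>D" "1\<le>i" "Suc i \<le> k-1"
    | (f) d where "y = PV d (k-1)" "z = VD d" "d\<in>D"
    unfolding nc_graph_def by blast
  then show ?case
  proof cases
    case a then show ?thesis using step(3) unfolding Rp_def by auto
  next
    case b then show ?thesis using step(3) unfolding Rp_def by auto
  next
    case c then show ?thesis using step(3) unfolding Rp_def by auto
  next
    case e then show ?thesis using step(3) unfolding Rp_def by auto
  next
    case f then show ?thesis using step(3) unfolding Rp_def by auto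
  qed
qed

lemma R_irrefl: "\<not> Rp k D X x x" unfolding Rp_def by auto

end

lemma fin_ex: "(x,y)\<in>R^^N \<Longrightarrow> 0<N \<Longrightarrow> N\<le>(k::nat) \<Longrightarrow> \<exists>j. 0<j \<and> j\<le>k \<and> (x,y)\<in>R^^j"
  by (intro exI[of _ N]) simp

context ncl begin

lemma Hs_path:
  assumes MD: "M \<subseteq> D" and MX: "\<Union>M = X" and R: "Rp k D X x y"
  shows "\<exists>j. 0<j \<and> j\<le>k \<and> (x,y) \<in> (Hs k D M)^^j"
proof -
  let ?H = "Hs k D M"
  have ch: "\<And>d i j. d\<in>D \<Longrightarrow> 1\<le>i \<Longrightarrow> i\<le>j \<Longrightarrow> j\<le>k-1 \<Longrightarrow> (PV d i, PV d j) \<in> ?H^^(j-i)"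
    by (rule pv_chain) (auto simp: Hs_def)
  have e1: "\<And>d. d\<in>D \<Longrightarrow> (VA, PV d 1) \<in> ?H" by (auto simp: Hs_def)
  have e2: "\<And>d. d\<in>D \<Longrightarrow> (PV d (k-1), VD d) \<in> ?H" by (auto simp: Hs_def)
  have e3: "\<And>d t. d\<in>D \<Longrightarrow> t\<in>d \<Longrightarrow> (VD d, WT t) \<in> ?H" by (auto simp: Hs_def)
  have e4: "\<And>d. d\<in>M \<Longrightarrow> (VA, VD d) \<in> ?H" by (auto simp: Hs_def)
  have k1: "1 \<le> k-1" using k2 by auto
  from R show ?thesis unfolding Rp_def
  proof (elim disjE bexE exE conjE)
    fix d assume d: "d\<in>D" and xy: "x = VA" "y = VD d"
    have "(PV d 1, PV d (k-1)) \<in> ?H^^(k-1-1)" using ch[OF d _ k1] k1 by auto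
    from e1[OF d] this have "(VA, PV d (k-1)) \<in> ?H^^Suc (k-1-1)" by (rule relpow_Suc_I2)
    then have "(VA, VD d) \<in> ?H^^Suc (Suc (k-1-1))" using e2[OF d] by (rule relpow_Suc_I)
    moreover have "0 < (Suc (Suc (k-1-1))::nat)" "Suc (Suc (k-1-1)) \<le> k" using k2 by auto
    ultimately show ?thesis unfolding xy by (rule fin_ex)
  next
    fix d i assume d: "d\<in>D" and i: "1\<le>i" "i\<le>k-1" and xy: "x = VA" "y = PV d i"
    have "(PV d 1, PV d i) \<in> ?H^^(i-1)" using ch[OF d _ i(1)] i by auto
    from e1[OF d] this have "(VA, PV d i) \<in> ?H^^Suc (i-1)" by (rule relpow_Suc_I2)
    moreover have "0 < (Suc (i-1)::nat)" "Suc (i-1) \<le> k" using i by auto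
    ultimately show ?thesis unfolding xy by (rule fin_ex)
  next
    fix t assume t: "t\<in>X" and xy: "x = VA" "y = WT t"
    obtain d where d: "d\<in>M" "t\<in>d" using MX t by auto
    have "(VD d, WT t) \<in> ?H^^1" using e3 d MD by auto
    from e4[OF d(1)] this have "(VA, WT t) \<in> ?H^^Suc 1" by (rule relpow_Suc_I2)
    moreover have "0 < (Suc 1::nat)" "Suc 1 \<le> k" using k2 by auto
    ultimately show ?thesis unfolding xy by (rule fin_ex)
  next
    fix d i j assume d: "d\<in>D" and ij: "1\<le>i" "i<j" "j\<le>k-1" and xy: "x=PV d i" "y=PV d j"
    have "(PV d i, PV d j) \<in> ?H^^(j-i)" using ch[OF d] ij by auto
    moreover have "0 < (j-i::nat)" "j-i \<le> k" using ij by auto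
    ultimately show ?thesis unfolding xy by (rule fin_ex)
  next
    fix d i assume d: "d\<in>D" and i: "1\<le>i" "i\<le>k-1" and xy: "x = PV d i" "y = VD d"
    have "(PV d i, PV d (k-1)) \<in> ?H^^(k-1-i)" using ch[OF d i(1) i(2) le_refl] by simp
    then have "(PV d i, VD d) \<in> ?H^^Suc (k-1-i)" using e2[OF d] by (rule relpow_Suc_I)
    moreover have "0 < (Suc (k-1-i)::nat)" "Suc (k-1-i) \<le> k" using i by auto
    ultimately show ?thesis unfolding xy by (rule fin_ex)
  next
    fix d i t assume d: "d\<in>D" and i: "1\<le>i" "i\<le>k-1" and t: "t\<in>d" and xy: "x = PV d i" "y = WT t"
    have "(PV d i, PV d (k-1)) \<in> ?H^^(k-1-i)" using ch[OF d i(1) i(2) le_refl] by simp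
    then have "(PV d i, VD d) \<in> ?H^^Suc (k-1-i)" using e2[OF d] by (rule relpow_Suc_I)
    then have "(PV d i, WT t) \<in> ?H^^Suc (Suc (k-1-i))" using e3[OF d t] by (rule relpow_Suc_I)
    moreover have "0 < (Suc (Suc (k-1-i))::nat)" "Suc (Suc (k-1-i)) \<le> k" using i by auto
    ultimately show ?thesis unfolding xy by (rule fin_ex)
  next
    fix d t assume d: "d\<in>D" and t: "t\<in>d" and xy: "x = VD d" "y = WT t"
    have "(VD d, WT t) \<in> ?H^^1" using e3[OF d t] by auto
    moreover have "0 < (1::nat)" "1 \<le> k" using k2 by auto
    ultimately show ?thesis unfolding xy by (rule fin_ex)
  qed
qed

lemma Hs_sub: "M \<subseteq> D \<Longrightarrow> Hs k D M \<subseteq> nc_graph k D X"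
  using subX unfolding Hs_def nc_graph_def by blast

lemma R_trancl: assumes "Rp k D X x y" shows "(x,y) \<in> (nc_graph k D X)\<^sup>+"
proof -
  obtain j where j: "0<j" "(x,y) \<in> (Hs k D D)^^j" using Hs_path[OF _ cov assms] by auto
  then have "(x,y) \<in> (Hs k D D)\<^sup>+" using trancl_power by blast
  then show ?thesis using trancl_mono Hs_sub by blast
qed

lemma trancl_eq: "(x,y) \<in> (nc_graph k D X)\<^sup>+ \<longleftrightarrow> Rp k D X x y"
  using R_trancl trancl_R by blast

lemma Hs_spanner: "M \<subseteq> D \<Longrightarrow> \<Union>M = X \<Longrightarrow> is_tc_spanner (nc_graph k D X) k (Hs k D M)"
  unfolding is_tc_spanner_def
proof (intro conjI ballI)
  assume "M \<subseteq> D" "\<Union>M = X"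
  then show "Hs k D M \<subseteq> (nc_graph k D X)\<^sup>+" using Hs_sub by auto
next
  fix p assume MD: "M \<subseteq> D" and MX: "\<Union>M = X" and p: "p \<in> (nc_graph k D X)\<^sup>+"
  obtain u v where p': "p = (u,v)" by fastforce
  have R: "Rp k D X u v" using p p' trancl_eq by simp
  obtain j where j: "j \<le> k" "(u,v) \<in> Hs k D M ^^ j" using Hs_path[OF MD MX R] by auto
  then show "case p of (u,v) \<Rightarrow> \<exists>j\<le>k. (u,v) \<in> Hs k D M ^^ j"
    using p' by auto
qed

lemma Hs_card: "M \<subseteq> D \<Longrightarrow> card (Hs k D M) \<le> card M + k * card D + (\<Sum>d\<in>D. card d)"
proof -
  assume MD: "M \<subseteq> D"
  let ?n = "card D"
  have fS: "finite (Sigma D (\<lambda>d. d))" using finD fin_d by auto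
  have c0: "card {(VD d, WT t) | d t. d\<in>D \<and> t\<in>d} \<le> (\<Sum>d\<in>D. card d)"
  proof -
    have "{(VD d, WT t) | d t. d\<in>D \<and> t\<in>d} = (\<lambda>(d,t). (VD d, WT t)) ` Sigma D (\<lambda>d. d)" by auto
    then have "card {(VD d, WT t) | d t. d\<in>D \<and> t\<in>d} \<le> card (Sigma D (\<lambda>d. d))"
      using card_image_le[OF fS] by simp
    also have "\<dots> = (\<Sum>d\<in>D. card d)" by (rule card_SigmaI) (use finD fin_d in auto)
    finally show ?thesis .
  qed
  have c1: "card {(VA::'a vtx, PV d 1)|d. d\<in>D} \<le> ?n"
  proof -
    have "{(VA::'a vtx, PV d 1)|d. d\<in>D} = (\<lambda>d. (VA::'a vtx, PV d 1)) ` D" by auto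
    then show ?thesis using card_image_le[OF finD] by simp
  qed
  have c2: "card {(PV d i, PV d (Suc i)) | d i. d\<in>D \<and> 1\<le>i \<and> Suc i \<le> k-1} \<le> ?n * (k-2)"
  proof -
    let ?I = "(\<lambda>(d,i). (PV d i, PV d (Suc i))) ` (D \<times> {1..<k-1})"
    have sub: "{(PV d i, PV d (Suc i)) | d i. d\<in>D \<and> 1\<le>i \<and> Suc i \<le> k-1} \<subseteq> ?I" by auto
    have fI: "finite ?I" using finD by simp
    have "card ?I \<le> card (D \<times> {1..<k-1})" by (rule card_image_le) (simp add: finD)
    also have "\<dots> = ?n * (k-2)" by (simp add: card_cartesian_product numeral_2_eq_2)
    finally have "card ?I \<le> ?n * (k-2)" .
    moreover have "card {(PV d i, PV d (Suc i)) | d i. d\<in>D \<and> 1\<le>i \<and> Suc i \<le> k-1} \<le> card ?I"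
      by (rule card_mono[OF fI sub])
    ultimately show ?thesis by linarith
  qed
  have c3: "card {(PV d (k-1), VD d)|d. d\<in>D} \<le> ?n"
  proof -
    have "{(PV d (k-1), VD d)|d. d\<in>D} = (\<lambda>d. (PV d (k-1), VD d)) ` D" by auto
    then show ?thesis using card_image_le[OF finD] by simp
  qed
  have c4: "card {(VA::'a vtx, VD d)|d. d\<in>M} \<le> card M"
  proof -
    have "{(VA::'a vtx, VD d)|d. d\<in>M} = (\<lambda>d. (VA::'a vtx, VD d)) ` M" by auto
    then show ?thesis using card_image_le[OF finite_subset[OF MD finD]] by simp
  qed
  have "card (Hs k D M) \<le> card {(VD d, WT t) | d t. d\<in>D \<and> t\<in>d} + card {(VA::'a vtx, PV d 1)|d. d\<in>D}
     + card {(PV d i, PV d (Suc i)) | d i. d\<in>D \<and> 1\<le>i \<and> Suc i \<le> k-1} + card {(PV d (k-1), VD d)|d. d\<in>D}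
     + card {(VA::'a vtx, VD d)|d. d\<in>M}" (is "_ \<le> card ?A + card ?B + card ?C + card ?D' + card ?E")
  proof -
    have "card (Hs k D M) \<le> card (?A \<union> ?B \<union> ?C \<union> ?D') + card ?E" unfolding Hs_def by (rule card_Un_le)
    moreover have "card (?A \<union> ?B \<union> ?C \<union> ?D') \<le> card (?A \<union> ?B \<union> ?C) + card ?D'" by (rule card_Un_le)
    moreover have "card (?A \<union> ?B \<union> ?C) \<le> card (?A \<union> ?B) + card ?C" by (rule card_Un_le)
    moreover have "card (?A \<union> ?B) \<le> card ?A + card ?B" by (rule card_Un_le)
    ultimately show ?thesis by linarith
  qed
  moreover have "?n + ?n*(k-2) + ?n = k * ?n"
  proof -
    obtain m where "k = Suc (Suc m)" using k2 by (metis add_2_eq_Suc le_add_diff_inverse)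
    then show ?thesis by simp
  qed
  ultimately show ?thesis using c0 c1 c2 c3 c4 by linarith
qed

end

context ncl begin

abbreviation "EE \<equiv> nc_graph k D X"

lemma path_R': assumes "H \<subseteq> EE\<^sup>+" "(x,y) \<in> H\<^sup>*" shows "x = y \<or> Rp k D X x y"
proof -
  have "(x,y) \<in> (EE\<^sup>+)\<^sup>*" using rtrancl_mono[OF assms(1)] assms(2) by blast
  then have "(x,y) \<in> EE\<^sup>*" by simp
  then show ?thesis using trancl_eq by (meson rtranclD)
qed

lemma path_R: "H \<subseteq> EE\<^sup>+ \<Longrightarrow> (x,y) \<in> H^^j \<Longrightarrow> x = y \<or> Rp k D X x y"
  using path_R' relpow_imp_rtrancl by metis

lemma last_edge: assumes sp: "is_tc_spanner EE k H" and R: "Rp k D X u x"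
  shows "\<exists>j w. j < k \<and> (u,w) \<in> H^^j \<and> (w,x) \<in> H"
proof -
  have "(u,x) \<in> EE\<^sup>+" using R trancl_eq by simp
  then obtain j where j: "j \<le> k" "(u,x) \<in> H^^j" using sp unfolding is_tc_spanner_def by blast
  have "j \<noteq> 0" using j R_irrefl R by (cases j) auto
  then obtain j' where "j = Suc j'" using not0_implies_Suc by blast
  then obtain w where "(u,w) \<in> H^^j'" "(w,x)\<in>H" using j(2) by (metis relpow_Suc_E)
  then show ?thesis using j(1) \<open>j = Suc j'\<close> by (intro exI[of _ j'] exI[of _ w]) simp
qed

lemma R_VD: "Rp k D X a (VD d) \<Longrightarrow> a = VA \<or> (\<exists>i. 1\<le>i \<and> i\<le>k-1 \<and> a = PV d i)"
  unfolding Rp_def by auto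
lemma R_PV: "Rp k D X a (PV d j) \<Longrightarrow> a = VA \<or> (\<exists>i. 1\<le>i \<and> i\<le>k-1 \<and> a = PV d i)"
  unfolding Rp_def by auto
lemma R_VDWT: "Rp k D X (VD d) y \<Longrightarrow> d \<in> D \<and> (\<exists>t\<in>d. y = WT t)"
  unfolding Rp_def by auto
lemma R_WT: "\<not> Rp k D X (WT t) y" unfolding Rp_def by auto
lemma R_toVA: "\<not> Rp k D X y VA" unfolding Rp_def by auto
lemma R_PVVD: "Rp k D X (PV d i) (VD d') \<Longrightarrow> d' = d" unfolding Rp_def by auto
lemma R_toWT: "Rp k D X a (WT t) \<Longrightarrow> (\<forall>d. a \<noteq> VD d) \<Longrightarrow> \<exists>d\<in>D. t \<in> d"
  unfolding Rp_def using cov by auto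

lemma finE: "finite EE"
proof -
  define V where "V = {VA} \<union> VD ` D \<union> WT ` X \<union> (\<lambda>(d,i). PV d i) ` (D \<times> {0..k})"
  have "finite V" unfolding V_def using finD finX by auto
  moreover have "EE \<subseteq> V \<times> V" unfolding nc_graph_def V_def using k2 by force
  ultimately show ?thesis by (meson finite_SigmaI finite_subset)
qed

end

context ncl begin

lemma lower:
  assumes sp: "is_tc_spanner EE k H"
  shows "opt_3nc D X + k * card D + (\<Sum>d\<in>D. card d) \<le> card H"
proof -
  have HE: "H \<subseteq> EE\<^sup>+" using sp unfolding is_tc_spanner_def by blast
  have finH: "finite H" using finite_subset[OF HE] finE finite_trancl by blast
  have HR: "\<And>a b. (a,b) \<in> H \<Longrightarrow> Rp k D X a b" using HE trancl_eq by blast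
  define Gd where "Gd (d::'a set) = insert (VD d) (PV d ` {1..k-1})" for d
  define A where "A (d::'a set) = {e\<in>H. snd e \<in> Gd d}" for d
  define B where "B = {e\<in>H. \<exists>d t. e = (VD d, WT t)}"
  define C where "C = {e\<in>H. (\<exists>t. snd e = WT t) \<and> (\<forall>d. fst e \<noteq> VD d)}"
  have finG: "finite (Gd d)" for d unfolding Gd_def by simp
  have cardG: "card (Gd d) = k" for d
  proof -
    have "card (PV d ` {1..k-1}) = k - 1" by (simp add: card_image inj_on_def)
    moreover have "VD d \<notin> PV d ` {1..k-1}" by auto
    ultimately show ?thesis unfolding Gd_def using k2 by (simp add: card_insert_disjoint)
  qed
  have finA: "finite (A d)" for d unfolding A_def using finH by simp
  have inedge: "\<exists>w. (w,x)\<in>H" if "d\<in>D" "x \<in> Gd d" for d x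
  proof -
    have "Rp k D X VA x" using that unfolding Gd_def Rp_def by auto
    then show ?thesis using last_edge[OF sp] by blast
  qed
  have sndA: "snd ` A d = Gd d" if dD0: "d\<in>D" for d
  proof
    show "snd ` A d \<subseteq> Gd d" unfolding A_def by auto
    show "Gd d \<subseteq> snd ` A d"
    proof
      fix x assume "x \<in> Gd d"
      then obtain w where "(w,x)\<in>H" using inedge[OF dD0] by blast
      then have "(w,x) \<in> A d" unfolding A_def using \<open>x\<in>Gd d\<close> by simp
      then show "x \<in> snd ` A d" by force
    qed
  qed
  have cardA: "k \<le> card (A d)" if "d\<in>D" for d
    using card_image_le[OF finA, of snd d] sndA[OF that] cardG by simp
  have B_eq: "B = (\<lambda>(d,t). (VD d, WT t)) ` Sigma D (\<lambda>d. d)"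
  proof
    show "B \<subseteq> (\<lambda>(d,t). (VD d, WT t)) ` Sigma D (\<lambda>d. d)"
    proof
      fix e assume "e \<in> B"
      then obtain d t where e: "e = (VD d, WT t)" "e \<in> H" unfolding B_def by blast
      then have "d\<in>D" "t \<in> d" using R_VDWT[OF HR] by auto
      then show "e \<in> (\<lambda>(d,t). (VD d, WT t)) ` Sigma D (\<lambda>d. d)" using e by force
    qed
    show "(\<lambda>(d,t). (VD d, WT t)) ` Sigma D (\<lambda>d. d) \<subseteq> B"
    proof
      fix e assume "e \<in> (\<lambda>(d,t). (VD d, WT t)) ` Sigma D (\<lambda>d. d)"
      then obtain d t where e: "e = (VD d, WT t)" "d\<in>D" "t\<in>d" by auto
      have "Rp k D X (VD d) (WT t)" using e unfolding Rp_def by auto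
      then obtain j w where jw: "(VD d, w) \<in> H^^j" "(w, WT t) \<in> H" using last_edge[OF sp] by blast
      have "w = VD d"
      proof (rule ccontr)
        assume "w \<noteq> VD d"
        then have "Rp k D X (VD d) w" using path_R[OF HE jw(1)] by auto
        then obtain t' where "w = WT t'" using R_VDWT by blast
        then show False using HR[OF jw(2)] R_WT by simp
      qed
      then show "e \<in> B" using jw e unfolding B_def by simp
    qed
  qed
  have cardB: "card B = (\<Sum>d\<in>D. card d)"
  proof -
    have "inj_on (\<lambda>(d,t). (VD d, WT t)) (Sigma D (\<lambda>d. d))" by (auto simp: inj_on_def)
    then have "card B = card (Sigma D (\<lambda>d. d))" unfolding B_eq by (rule card_image)
    also have "\<dots> = (\<Sum>d\<in>D. card d)" by (rule card_SigmaI) (use finD fin_d in auto)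
    finally show ?thesis .
  qed
  have disjA: "\<forall>d\<in>D. \<forall>d'\<in>D. d \<noteq> d' \<longrightarrow> A d \<inter> A d' = {}"
    unfolding A_def Gd_def by auto
  have cardUA: "card (\<Union>d\<in>D. A d) = (\<Sum>d\<in>D. card (A d))"
    by (rule card_UN_disjoint) (use finD finA disjA in auto)
  have finU: "finite (\<Union>d\<in>D. A d)" using finD finA by auto
  have finB: "finite B" unfolding B_def using finH by simp
  have finC: "finite C" unfolding C_def using finH by simp
  have d1: "(\<Union>d\<in>D. A d) \<inter> B = {}" unfolding A_def B_def Gd_def by auto
  have d2: "((\<Union>d\<in>D. A d) \<union> B) \<inter> C = {}" unfolding A_def B_def C_def Gd_def by auto
  have cardU: "card ((\<Union>d\<in>D. A d) \<union> B \<union> C) = (\<Sum>d\<in>D. card (A d)) + card B + card C"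
    using card_Un_disjoint[OF finU finB d1] card_Un_disjoint[OF _ finC d2] finU finB cardUA by simp
  have subH: "(\<Union>d\<in>D. A d) \<union> B \<union> C \<subseteq> H" unfolding A_def B_def C_def by auto
  have cH: "(\<Sum>d\<in>D. card (A d)) + card B + card C \<le> card H"
    using card_mono[OF finH subH] cardU by simp
  define g where "g (e::'a vtx \<times> 'a vtx) = (SOME d. d\<in>D \<and> snd e \<in> WT ` d)" for e
  have gC: "g e \<in> D \<and> snd e \<in> WT ` g e" if eC: "e \<in> C" for e
  proof -
    obtain a t where e: "e = (a, WT t)" "(a, WT t)\<in>H" "\<forall>d. a \<noteq> VD d"
      using eC unfolding C_def by (cases e) auto
    obtain d where "d\<in>D" "t\<in>d" using R_toWT[OF HR[OF e(2)] e(3)] by blast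
    then have "\<exists>d. d\<in>D \<and> snd e \<in> WT ` d" using e by auto
    then show ?thesis unfolding g_def by (rule someI_ex)
  qed
  define Mx where "Mx = {d\<in>D. k < card (A d)}"
  define M where "M = Mx \<union> g ` C"
  have MD: "M \<subseteq> D" unfolding M_def Mx_def using gC by auto
  have cardM: "card M \<le> card Mx + card C"
    unfolding M_def using card_Un_le[of Mx "g ` C"] card_image_le[OF finC, of g] by linarith
  have cardMx: "card Mx \<le> (\<Sum>d\<in>D. card (A d) - k)"
  proof -
    have "card Mx = (\<Sum>d\<in>Mx. 1)" by simp
    also have "\<dots> \<le> (\<Sum>d\<in>Mx. card (A d) - k)" by (rule sum_mono) (auto simp: Mx_def)
    also have "\<dots> \<le> (\<Sum>d\<in>D. card (A d) - k)" by (rule sum_mono2) (use finD in \<open>auto simp: Mx_def\<close>)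
    finally show ?thesis .
  qed
  have sumA: "(\<Sum>d\<in>D. card (A d)) = (\<Sum>d\<in>D. card (A d) - k) + k * card D"
  proof -
    have "(\<Sum>d\<in>D. card (A d)) = (\<Sum>d\<in>D. (card (A d) - k) + k)"
      by (rule sum.cong) (use cardA in auto)
    also have "\<dots> = (\<Sum>d\<in>D. card (A d) - k) + k * card D" by (simp add: sum.distrib)
    finally show ?thesis .
  qed
  have cover: "\<Union>M = X"
  proof
    show "\<Union>M \<subseteq> X" using MD cov by auto
    show "X \<subseteq> \<Union>M"
    proof
      fix t assume tX: "t \<in> X"
      show "t \<in> \<Union>M"
      proof (rule ccontr)
        assume nt: "t \<notin> \<Union>M"
        have noC: "\<exists>d. w = VD d" if "(w, WT t)\<in>H" for w
        proof (rule ccontr)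
          assume "\<not> (\<exists>d. w = VD d)"
          then have "(w, WT t) \<in> C" unfolding C_def using that by auto
          then have g1: "g (w, WT t) \<in> M" and g2: "WT t \<in> WT ` g (w, WT t)" using gC[of "(w, WT t)"] unfolding M_def by auto
          from g2 have "t \<in> g (w, WT t)" by auto
          with g1 show False using nt by blast
        qed
        have "Rp k D X VA (WT t)" using tX unfolding Rp_def by auto
        then obtain j w where jw: "j < k" "(VA, w) \<in> H^^j" "(w, WT t) \<in> H" using last_edge[OF sp] by blast
        obtain d where wd: "w = VD d" using noC jw(3) by blast
        have dD: "d\<in>D" "t\<in>d" using R_VDWT[OF HR[OF jw(3)[unfolded wd]]] by auto
        have "d \<notin> Mx" using nt dD unfolding M_def by auto
        then have cAd: "card (A d) = k" using cardA[OF dD(1)] dD unfolding Mx_def by auto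
        have inj: "inj_on snd (A d)"
          by (rule eq_card_imp_inj_on[OF finA]) (simp add: sndA[OF dD(1)] cardG cAd)
        have "card (Gd d) \<le> j"
        proof (rule chain_bound[where r = VA and H = H and v = "VD d"])
          show "finite (Gd d)" by (rule finG)
          show "VA \<notin> Gd d" unfolding Gd_def by auto
          show "\<forall>x\<in>Gd d. \<forall>a b. (a,x)\<in>H \<longrightarrow> (b,x)\<in>H \<longrightarrow> a=b"
          proof (intro ballI allI impI)
            fix x a b assume "x \<in> Gd d" "(a,x)\<in>H" "(b,x)\<in>H"
            then have "(a,x) \<in> A d" "(b,x) \<in> A d" unfolding A_def by auto
            then have "(a,x) = (b,x)" using inj_onD[OF inj, of "(a,x)" "(b,x)"] by simp
            then show "a = b" by simp
          qed
          show "\<forall>x\<in>Gd d. \<forall>a. (a,x)\<in>H \<longrightarrow> a\<in>Gd d \<or> a=VA"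
          proof (intro ballI allI impI)
            fix x a assume x: "x \<in> Gd d" and ax: "(a,x)\<in>H"
            have "a = VA \<or> (\<exists>i. 1\<le>i \<and> i\<le>k-1 \<and> a = PV d i)"
            proof -
              from x consider "x = VD d" | j where "x = PV d j" unfolding Gd_def by blast
              then show ?thesis
              proof cases
                case 1 then show ?thesis using R_VD HR[OF ax] by simp
              next
                case 2 then show ?thesis using R_PV HR[OF ax] by simp
              qed
            qed
            then show "a\<in>Gd d \<or> a=VA" unfolding Gd_def by auto
          qed
          show "\<forall>y\<in>Gd d. (y,VA)\<notin>H\<^sup>*"
          proof (intro ballI notI)
            fix y assume "y \<in> Gd d" "(y,VA)\<in>H\<^sup>*"
            then have "y = VA" using path_R'[OF HE] R_toVA by blast
            then show False using \<open>y \<in> Gd d\<close> unfolding Gd_def by auto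
          qed
          show "\<forall>x. (x,x)\<notin>H\<^sup>+"
          proof (intro allI notI)
            fix x assume "(x,x)\<in>H\<^sup>+"
            then have "(x,x) \<in> (EE\<^sup>+)\<^sup>+" using trancl_mono HE by blast
            then have "(x,x) \<in> EE\<^sup>+" by simp
            then show False using trancl_eq R_irrefl by blast
          qed
          show "VD d \<in> Gd d" unfolding Gd_def by simp
          show "\<forall>y\<in>Gd d. (y,VD d)\<in>H\<^sup>*"
          proof
            fix y assume "y \<in> Gd d"
            then consider "y = VD d" | i where "1\<le>i" "i\<le>k-1" "y = PV d i" unfolding Gd_def by auto
            then show "(y,VD d)\<in>H\<^sup>*"
            proof cases
              case 1 then show ?thesis by simp
            next
              case 2
              have "Rp k D X (PV d i) (WT t)" using 2 dD unfolding Rp_def by auto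
              then obtain j2 w2 where jw2: "(PV d i, w2) \<in> H^^j2" "(w2, WT t) \<in> H"
                using last_edge[OF sp] by blast
              obtain d2 where wd2: "w2 = VD d2" using noC jw2(2) by blast
              have "Rp k D X (PV d i) (VD d2)" using path_R[OF HE jw2(1)] wd2 by auto
              then have "d2 = d" by (rule R_PVVD)
              then show ?thesis using relpow_imp_rtrancl[OF jw2(1)] wd2 2 by simp
            qed
          qed
          show "(VA, VD d) \<in> H^^j" using jw(2) wd by simp
        qed
        then show False using cardG jw(1) by simp
      qed
    qed
  qed
  have "opt_3nc D X \<le> card M"
  proof -
    have fin: "finite {card M | M. M \<subseteq> D \<and> \<Union>M = X}"
    proof -
      have "{card M | M. M \<subseteq> D \<and> \<Union>M = X} \<subseteq> card ` Pow D" by auto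
      then show ?thesis using finD finite_subset by blast
    qed
    show ?thesis unfolding opt_3nc_def by (rule Min_le[OF fin]) (use MD cover in auto)
  qed
  then show ?thesis using cH cardB cardM cardMx sumA by linarith
qed

end


theorem mainTheorem15:
  fixes D :: "'a set set" and X :: "'a set" and k n :: nat
  assumes "k \<ge> 2"
    and "is_3nc_instance D X"
    and "card D = n"
    and "\<Union>D = X"
  shows "S_k k (nc_graph k D X) = opt_3nc D X + k * n + (\<Sum>d\<in>D. card d)"
proof -
  interpret ncl k D X using assms(1,2,4) by unfold_locales
  let ?S = "{card H | H. is_tc_spanner (nc_graph k D X) k H}"
  let ?O = "{card M | M. M \<subseteq> D \<and> \<Union>M = X}"
  have finO: "finite ?O"
  proof -
    have "?O \<subseteq> card ` Pow D" by auto
    then show ?thesis using finD finite_subset by blast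
  qed
  have "opt_3nc D X \<in> ?O" unfolding opt_3nc_def
    by (rule Min_in[OF finO]) (use assms(4) in auto)
  then obtain M0 where M0: "M0 \<subseteq> D" "\<Union>M0 = X" "card M0 = opt_3nc D X" by auto
  have sp0: "is_tc_spanner (nc_graph k D X) k (Hs k D M0)" by (rule Hs_spanner[OF M0(1,2)])
  have finS: "finite ?S"
  proof -
    have "?S \<subseteq> {..card ((nc_graph k D X)\<^sup>+)}"
    proof
      fix c assume "c \<in> ?S"
      then obtain H where H: "c = card H" "is_tc_spanner (nc_graph k D X) k H" by auto
      then have sub: "H \<subseteq> (nc_graph k D X)\<^sup>+" unfolding is_tc_spanner_def by blast
      have fT: "finite ((nc_graph k D X)\<^sup>+)" using finE finite_trancl by blast
      show "c \<in> {..card ((nc_graph k D X)\<^sup>+)}" using H(1) card_mono[OF fT sub] by simp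
    qed
    then show ?thesis using finite_subset by blast
  qed
  have ne: "card (Hs k D M0) \<in> ?S" using sp0 by auto
  have le1: "S_k k (nc_graph k D X) \<le> opt_3nc D X + k * n + (\<Sum>d\<in>D. card d)"
  proof -
    have "S_k k (nc_graph k D X) \<le> card (Hs k D M0)" unfolding S_k_def by (rule Min_le[OF finS ne])
    also have "\<dots> \<le> card M0 + k * card D + (\<Sum>d\<in>D. card d)" by (rule Hs_card[OF M0(1)])
    finally show ?thesis using M0(3) assms(3) by simp
  qed
  have "S_k k (nc_graph k D X) \<in> ?S" unfolding S_k_def using Min_in[OF finS] ne by blast
  then obtain H where H: "S_k k (nc_graph k D X) = card H" "is_tc_spanner (nc_graph k D X) k H" by auto
  have "opt_3nc D X + k * n + (\<Sum>d\<in>D. card d) \<le> S_k k (nc_graph k D X)"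
    using lower[OF H(2)] H(1) assms(3) by simp
  then show ?thesis using le1 by simp
qed


end
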